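(* Let $\mathcal{H}$ be a hypothesis class with Littlestone dimension $d<\infty$, and let $k\ge0$, $l\ge0$ be integers with $k\ge l+d$. Then \[ \mathrm{ELdim}(\mathcal{H}^l,k)\le (k+1)\, e^{\frac{2k+2}{k+1-l-d}}. \]
   Context: Hypotheses are maps $\mathcal{X}\to\{-1,+1\}$. The Littlestone dimension of $\mathcal{H}$ is the largest $d$ such that there is a complete binary tree of depth $d$ with internal nodes labeled by points of $\mathcal{X}$ such that every root-to-leaf path (left = label $-1$, right = $+1$) is agreed with by some $h\in\mathcal{H}$. $\mathcal{C}^l$ is the class of functions $x\mapsto1-2I(x\in D)$ with $D\subseteq\mathcal{X}$, $|D|\le l$; $\mathcal{H}^l=\{x\mapsto h(x)c(x):h\in\mathcal{H},c\in\mathcal{C}^l\}$. Extended mistake tree w.r.t. a class $\mathcal{F}$: a finite full binary tree (possibly a single leaf) in which each internal node $v$ is labeled by $x_v\in\mathcal{X}$ and has two solid downward edges, to its left child (label $-1$) and right child (label $+1$), plus one dashed downward edge to one of its two children; each leaf is labeled by some $h\in\mathcal{F}$ with $h(x_v)$ equal to the direction label at every internal node $v$ on the root-to-leaf path. A root-to-leaf path chooses at each internal node one downward edge; its length is its number of edges. The tree is $(k,m)$-difficult if every root-to-leaf path using at most $k$ solid edges has length at least $m$. $\mathrm{ELdim}(\mathcal{F},k)$ is the supremum of $m$ such that a $(k,m)$-difficult extended mistake tree w.r.t. $\mathcal{F}$ exists. *)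

theory Defs
  imports "HOL-Analysis.Analysis" "HOL-Library.Extended_Nat" "HOL-Library.Extended_Real"
begin

text \<open>Hypotheses are maps 'x \<Rightarrow> int taking values in {-1,+1}.\<close>

datatype 'x ltree = LLeaf | LNode 'x "'x ltree" "'x ltree"

fun lbranches :: "'x ltree \<Rightarrow> ('x \<times> int) list set" where
  "lbranches LLeaf = {[]}"
| "lbranches (LNode x l r) =
     {(x, -1) # p | p. p \<in> lbranches l} \<union> {(x, 1) # p | p. p \<in> lbranches r}"

definition lcomplete :: "nat \<Rightarrow> 'x ltree \<Rightarrow> bool" where
  "lcomplete d t \<longleftrightarrow> (\<forall>p\<in>lbranches t. length p = d)"

definition lshattered :: "('x \<Rightarrow> int) set \<Rightarrow> 'x ltree \<Rightarrow> bool" where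
  "lshattered H t \<longleftrightarrow> (\<forall>p\<in>lbranches t. \<exists>h\<in>H. \<forall>(x, y)\<in>set p. h x = y)"

definition Ldim :: "('x \<Rightarrow> int) set \<Rightarrow> enat" where
  "Ldim H = Sup {enat d | d. \<exists>t. lcomplete d t \<and> lshattered H t}"

definition Cl :: "nat \<Rightarrow> ('x \<Rightarrow> int) set" where
  "Cl l = {(\<lambda>x. 1 - 2 * (if x \<in> D then 1 else 0)) | D. finite D \<and> card D \<le> l}"

definition Hl :: "('x \<Rightarrow> int) set \<Rightarrow> nat \<Rightarrow> ('x \<Rightarrow> int) set" where
  "Hl H l = {(\<lambda>x. h x * c x) | h c. h \<in> H \<and> c \<in> Cl l}"

text \<open>ENode x b L R: internal node labelled x with left child L (label -1), right child R
  (label +1), and a dashed edge to R if b, to L otherwise. Leaves carry a hypothesis.\<close>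
datatype 'x etree = ELeaf "'x \<Rightarrow> int" | ENode 'x bool "'x etree" "'x etree"

fun evalid :: "('x \<Rightarrow> int) set \<Rightarrow> ('x \<times> int) list \<Rightarrow> 'x etree \<Rightarrow> bool" where
  "evalid F cs (ELeaf h) \<longleftrightarrow> h \<in> F \<and> (\<forall>(x, y)\<in>set cs. h x = y)"
| "evalid F cs (ENode x b l r) \<longleftrightarrow> evalid F ((x, -1) # cs) l \<and> evalid F ((x, 1) # cs) r"

definition ext_mistake_tree :: "('x \<Rightarrow> int) set \<Rightarrow> 'x etree \<Rightarrow> bool" where
  "ext_mistake_tree F t \<longleftrightarrow> evalid F [] t"

datatype edge = SolidL | SolidR | Dashed

fun epaths :: "'x etree \<Rightarrow> edge list set" where
  "epaths (ELeaf h) = {[]}"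
| "epaths (ENode x b l r) =
     {SolidL # p | p. p \<in> epaths l} \<union> {SolidR # p | p. p \<in> epaths r}
     \<union> {Dashed # p | p. p \<in> epaths (if b then r else l)}"

definition num_solid :: "edge list \<Rightarrow> nat" where
  "num_solid p = length (filter (\<lambda>e. e \<noteq> Dashed) p)"

definition difficult :: "nat \<Rightarrow> nat \<Rightarrow> 'x etree \<Rightarrow> bool" where
  "difficult k m t \<longleftrightarrow> (\<forall>p\<in>epaths t. num_solid p \<le> k \<longrightarrow> m \<le> length p)"

definition ELdim :: "('x \<Rightarrow> int) set \<Rightarrow> nat \<Rightarrow> enat" where
  "ELdim F k = Sup {enat m | m. \<exists>t. ext_mistake_tree F t \<and> difficult k m t}"

end

theory Submission
  imports Defs
begin


fun Phi :: "int \<Rightarrow> nat \<Rightarrow> nat" where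
  "Phi r 0 = (if r < 0 then 0 else 1)"
| "Phi r (Suc m) = Phi r m + Phi (r - 1) m"

lemma Phi_neg: "r < 0 \<Longrightarrow> Phi r m = 0"
  by (induction m arbitrary: r) auto

lemma Phi_mono_r: "r \<le> r' \<Longrightarrow> Phi r m \<le> Phi r' m"
proof (induction m arbitrary: r r')
  case 0 then show ?case by auto
next
  case (Suc m)
  have "Phi r m \<le> Phi r' m" "Phi (r-1) m \<le> Phi (r'-1) m" using Suc by auto
  then show ?case by simp
qed

lemma Phi_mono_m: "Phi r m \<le> Phi r (Suc m)" by simp

lemma Phi_pos: "0 \<le> r \<Longrightarrow> 1 \<le> Phi r m"
proof (induction m arbitrary: r)
  case (Suc m)
  then have "1 \<le> Phi r m" by simp
  then show ?case by simp
qed simp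

lemma Phi_sum: "Phi (int R) m = (\<Sum>i\<le>R. m choose i)"
proof (induction m arbitrary: R)
  case 0 then show ?case by (induction R) simp_all
next
  case (Suc m)
  show ?case
  proof (cases R)
    case 0 then show ?thesis using Suc.IH[of 0] by (simp add: Phi_neg)
  next
    case (Suc R')
    have e: "int R - 1 = int R'" using Suc by simp
    have A: "(\<Sum>i\<le>R. Suc m choose i) = 1 + (\<Sum>i\<le>R'. Suc m choose Suc i)"
      unfolding Suc by (subst sum.atMost_Suc_shift) simp
    have B: "(\<Sum>i\<le>R'. Suc m choose Suc i) = (\<Sum>i\<le>R'. m choose i) + (\<Sum>i\<le>R'. m choose Suc i)"
      by (simp add: sum.distrib)
    have C: "(\<Sum>i\<le>R. m choose i) = 1 + (\<Sum>i\<le>R'. m choose Suc i)"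
      unfolding Suc by (subst sum.atMost_Suc_shift) simp
    have D: "Phi (int R) (Suc m) = Phi (int R) m + Phi (int R') m" using e by simp
    show ?thesis using Suc.IH[of R] Suc.IH[of R'] A B C D by linarith
  qed
qed

lemma Phi_exp_bound:
  assumes M: "0 < M" and rM: "r \<le> M"
  shows "real (Phi (int r) M) \<le> exp (real r) * (real M / real r) ^ r"
proof (cases "r = 0")
  case True then show ?thesis using Phi_sum[of 0 M] by simp
next
  case False
  define q where "q = real r / real M"
  have q0: "0 < q" using False M by (simp add: q_def)
  have q1: "q \<le> 1" using rM M by (simp add: q_def)
  have "real (Phi (int r) M) * q ^ r = (\<Sum>i\<le>r. real (M choose i) * q ^ r)"
    by (simp add: Phi_sum sum_distrib_right)
  also have "\<dots> \<le> (\<Sum>i\<le>r. real (M choose i) * q ^ i)"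
    by (rule sum_mono) (use q0 q1 in \<open>auto intro!: mult_left_mono power_decreasing\<close>)
  also have "\<dots> \<le> (\<Sum>i\<le>M. real (M choose i) * q ^ i)"
    by (rule sum_mono2) (use rM q0 in auto)
  also have "\<dots> = (q + 1) ^ M"
    by (simp add: binomial_ring)
  also have "\<dots> \<le> exp q ^ M"
    by (rule power_mono) (use q0 in \<open>auto simp: add.commute exp_ge_add_one_self\<close>)
  also have "\<dots> = exp (real r)"
    using M by (simp add: q_def flip: exp_of_nat_mult)
  finally have *: "real (Phi (int r) M) * q ^ r \<le> exp (real r)" .
  have "(real M / real r) ^ r = 1 / q ^ r" by (simp add: q_def power_divide)
  then show ?thesis using * q0 M by (simp add: field_simps)
qed

lemma ratio_bound:
  assumes "l \<le> K" shows "(real K / real l) ^ l \<le> exp (real K - real l)"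
proof (cases "l = 0")
  case True then show ?thesis by simp
next
  case False
  have "real K / real l = 1 + (real K - real l) / real l" using False by (simp add: field_simps)
  also have "\<dots> \<le> exp ((real K - real l) / real l)" by (rule exp_ge_add_one_self)
  finally have "(real K / real l) ^ l \<le> exp ((real K - real l) / real l) ^ l"
    by (rule power_mono) (use assms in auto)
  also have "\<dots> = exp (real K - real l)" using False by (simp flip: exp_of_nat_mult)
  finally show ?thesis .
qed

lemma real_final:
  fixes k l d M :: nat
  assumes kld: "k \<ge> l + d" and P: "Phi (int k + 1) M \<le> Phi (int l) M * Phi (int d) M"
  shows "real M \<le> (real k + 1) * exp ((2 * real k + 2) / (real k + 1 - real l - real d))"
proof -
  define K where "K = Suc k"
  define S where "S = K - l - d"
  have S1: "S \<ge> 1" using kld by (simp add: S_def K_def)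
  have Sr: "real k + 1 - real l - real d = real S" using kld by (simp add: S_def K_def)
  have Kr: "real k + 1 = real K" "2 * real k + 2 = 2 * real K" by (simp_all add: K_def)
  have "real M \<le> real K * exp (2 * real K / real S)"
  proof (cases "M < K")
    case True
    have "0 \<le> (2 * real K) / real S" by simp
    then have "1 \<le> exp ((2 * real K) / real S)" by simp
    then have "real K \<le> real K * exp ((2 * real K) / real S)"
      by (metis mult.right_neutral mult_left_mono of_nat_0_le_iff)
    moreover have "real M \<le> real K" using True by simp
    ultimately show ?thesis by linarith
  next
    case False
    then have MK: "K \<le> M" by simp
    have M0: "0 < M" using MK by (simp add: K_def)
    define u where "u = real M / real K"
    have u1: "1 \<le> u" using MK by (simp add: u_def K_def)
    have "u ^ K \<le> real (M choose K)" unfolding u_def by (rule binomial_ge_n_over_k_pow_k[OF MK])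
    also have "M choose K \<le> Phi (int K) M" by (simp add: Phi_sum member_le_sum del: Phi.simps)
    also have "int K = int k + 1" by (simp add: K_def)
    finally have "u ^ K \<le> real (Phi (int l) M * Phi (int d) M)" using P by linarith
    also have "\<dots> \<le> (exp (real l) * (real M / real l) ^ l) * (exp (real d) * (real M / real d) ^ d)"
      unfolding of_nat_mult
      by (rule mult_mono) (use Phi_exp_bound[OF M0, of l] Phi_exp_bound[OF M0, of d] MK kld
          in \<open>auto simp: K_def\<close>)
    also have "(real M / real l) ^ l = u ^ l * (real K / real l) ^ l"
      by (simp add: u_def K_def flip: power_mult_distrib)
    also have "(real M / real d) ^ d = u ^ d * (real K / real d) ^ d"
      by (simp add: u_def K_def flip: power_mult_distrib)
    finally have A: "u ^ K \<le> exp (real l) * (u ^ l * (real K / real l) ^ l) *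
                         (exp (real d) * (u ^ d * (real K / real d) ^ d))" .
    have B1: "(real K / real l) ^ l \<le> exp (real K - real l)" by (rule ratio_bound) (use kld in \<open>simp add: K_def\<close>)
    have B2: "(real K / real d) ^ d \<le> exp (real K - real d)" by (rule ratio_bound) (use kld in \<open>simp add: K_def\<close>)
    have "exp (real l) * (u ^ l * (real K / real l) ^ l) * (exp (real d) * (u ^ d * (real K / real d) ^ d))
        \<le> exp (real l) * (u ^ l * exp (real K - real l)) * (exp (real d) * (u ^ d * exp (real K - real d)))"
      using u1 B1 B2 by (intro mult_mono mult_left_mono) auto
    also have "\<dots> = (exp (real l) * exp (real K - real l) * exp (real d) * exp (real K - real d)) * (u ^ l * u ^ d)"
      by (simp add: mult_ac)
    also have "exp (real l) * exp (real K - real l) * exp (real d) * exp (real K - real d) = exp (2 * real K)"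
      by (simp flip: exp_add)
    also have "u ^ l * u ^ d = u ^ (l + d)" by (simp add: power_add)
    finally have C: "u ^ K \<le> exp (2 * real K) * u ^ (l + d)" using A by linarith
    have "u ^ K = u ^ (l + d) * u ^ S" using kld by (simp add: S_def K_def flip: power_add)
    then have "u ^ S \<le> exp (2 * real K)" using C u1 by (simp add: mult.commute)
    moreover have "exp (2 * real K / real S) ^ S = exp (2 * real K)"
      using S1 by (simp flip: exp_of_nat_mult)
    ultimately have "u ^ S \<le> exp (2 * real K / real S) ^ S" by simp
    moreover obtain S' where "S = Suc S'" using S1 by (cases S) auto
    ultimately have "u \<le> exp (2 * real K / real S)"
      by (metis power_le_imp_le_base exp_ge_zero)
    then show "real M \<le> real K * exp (2 * real K / real S)"
      using MK by (simp add: u_def field_simps K_def)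
  qed
  then show ?thesis unfolding Sr unfolding Kr .
qed



lemma lbranches_ne: "lbranches t \<noteq> {}" by (induction t) auto

lemma lshattered_node:
  "lshattered A (LNode x l r) \<longleftrightarrow> lshattered {h\<in>A. h x = -1} l \<and> lshattered {h\<in>A. h x = 1} r"
proof
  assume a: "lshattered A (LNode x l r)"
  show "lshattered {h\<in>A. h x = -1} l \<and> lshattered {h\<in>A. h x = 1} r" unfolding lshattered_def
  proof (intro conjI ballI)
    fix p assume "p \<in> lbranches l"
    then have "(x,-1)#p \<in> lbranches (LNode x l r)" by auto
    then obtain h where "h \<in> A" "\<forall>(a,b)\<in>set ((x,-1)#p). h a = b" using a unfolding lshattered_def by blast
    then show "\<exists>h\<in>{h\<in>A. h x = -1}. \<forall>(a,b)\<in>set p. h a = b" by auto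
  next
    fix p assume "p \<in> lbranches r"
    then have "(x,1)#p \<in> lbranches (LNode x l r)" by auto
    then obtain h where "h \<in> A" "\<forall>(a,b)\<in>set ((x,1)#p). h a = b" using a unfolding lshattered_def by blast
    then show "\<exists>h\<in>{h\<in>A. h x = 1}. \<forall>(a,b)\<in>set p. h a = b" by auto
  qed
next
  assume b: "lshattered {h\<in>A. h x = -1} l \<and> lshattered {h\<in>A. h x = 1} r"
  show "lshattered A (LNode x l r)" unfolding lshattered_def
  proof
    fix q assume "q \<in> lbranches (LNode x l r)"
    then consider p where "p \<in> lbranches l" "q = (x,-1)#p" | p where "p \<in> lbranches r" "q = (x,1)#p" by auto
    then show "\<exists>h\<in>A. \<forall>(a,b)\<in>set q. h a = b" using b unfolding lshattered_def by cases fastforce+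
  qed
qed

lemma lshattered_leaf: "lshattered A LLeaf \<longleftrightarrow> A \<noteq> {}"
  unfolding lshattered_def by auto

lemma lcomplete_leaf: "lcomplete n LLeaf \<longleftrightarrow> n = 0"
  unfolding lcomplete_def by auto

lemma lcomplete_node:
  "lcomplete n (LNode x l r) \<longleftrightarrow> (\<exists>n'. n = Suc n' \<and> lcomplete n' l \<and> lcomplete n' r)"
proof
  assume a: "lcomplete n (LNode x l r)"
  obtain p where p: "p \<in> lbranches l" using lbranches_ne by blast
  then have "(x,-1)#p \<in> lbranches (LNode x l r)" by auto
  then have "length ((x,-1)#p) = n" using a unfolding lcomplete_def by blast
  then obtain n' where n: "n = Suc n'" by auto
  have "lcomplete n' l" unfolding lcomplete_def
  proof
    fix q assume "q \<in> lbranches l"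
    then have "(x,-1)#q \<in> lbranches (LNode x l r)" by auto
    then show "length q = n'" using a n unfolding lcomplete_def by (metis length_Cons nat.inject)
  qed
  moreover have "lcomplete n' r" unfolding lcomplete_def
  proof
    fix q assume "q \<in> lbranches r"
    then have "(x,1)#q \<in> lbranches (LNode x l r)" by auto
    then show "length q = n'" using a n unfolding lcomplete_def by (metis length_Cons nat.inject)
  qed
  ultimately show "\<exists>n'. n = Suc n' \<and> lcomplete n' l \<and> lcomplete n' r" using n by auto
next
  assume "\<exists>n'. n = Suc n' \<and> lcomplete n' l \<and> lcomplete n' r"
  then show "lcomplete n (LNode x l r)" unfolding lcomplete_def by auto
qed

lemma trunc:
  "lcomplete n t \<Longrightarrow> lshattered A t \<Longrightarrow> j \<le> n \<Longrightarrow> \<exists>t'. lcomplete j t' \<and> lshattered A t'"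
proof (induction t arbitrary: A n j)
  case LLeaf then show ?case by (auto simp: lcomplete_leaf intro!: exI[of _ LLeaf])
next
  case (LNode x l r)
  obtain n' where n: "n = Suc n'" "lcomplete n' l" "lcomplete n' r"
    using LNode.prems(1) by (auto simp: lcomplete_node)
  show ?case
  proof (cases j)
    case 0
    have "A \<noteq> {}" using LNode.prems(2) lbranches_ne unfolding lshattered_def by blast
    then show ?thesis using 0 by (auto simp: lcomplete_leaf lshattered_leaf intro!: exI[of _ LLeaf])
  next
    case (Suc j')
    have sh: "lshattered {h\<in>A. h x = -1} l" "lshattered {h\<in>A. h x = 1} r"
      using LNode.prems(2) by (auto simp: lshattered_node)
    obtain l' where "lcomplete j' l'" "lshattered {h\<in>A. h x = -1} l'"
      using LNode.IH(1)[OF n(2) sh(1)] Suc LNode.prems(3) n(1) by auto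
    moreover obtain r' where "lcomplete j' r'" "lshattered {h\<in>A. h x = 1} r'"
      using LNode.IH(2)[OF n(3) sh(2)] Suc LNode.prems(3) n(1) by auto
    ultimately show ?thesis using Suc
      by (auto simp: lcomplete_node lshattered_node intro!: exI[of _ "LNode x l' r'"])
  qed
qed

lemma lshattered_mono: "lshattered A t \<Longrightarrow> A \<subseteq> B \<Longrightarrow> lshattered B t"
  unfolding lshattered_def by blast

lemma Ldim_ge: "lcomplete n t \<Longrightarrow> lshattered A t \<Longrightarrow> enat n \<le> Ldim A"
  unfolding Ldim_def by (rule Sup_upper) blast

lemma Ldim_mono: "A \<subseteq> B \<Longrightarrow> Ldim A \<le> Ldim B"
  unfolding Ldim_def by (rule Sup_subset_mono) (auto intro: lshattered_mono)

lemma Ldim_attain: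
  assumes "A \<noteq> {}" "Ldim A = enat e"
  shows "\<exists>t. lcomplete e t \<and> lshattered A t"
proof -
  define S where "S = {enat d |d. \<exists>t. lcomplete d t \<and> lshattered A t}"
  have "enat 0 \<in> S" unfolding S_def using assms(1)
    by (auto simp: lcomplete_leaf lshattered_leaf intro!: exI[of _ LLeaf])
  then have ne: "S \<noteq> {}" by auto
  have "Sup S = enat e" using assms(2) by (simp add: Ldim_def S_def)
  then have fin: "finite S" "Max S = enat e" using ne unfolding Sup_enat_def by (auto split: if_splits)
  then have "enat e \<in> S" using ne Max_in by metis
  then show ?thesis unfolding S_def by auto
qed

definition ld :: "('x \<Rightarrow> int) set \<Rightarrow> nat" where "ld A = the_enat (Ldim A)"
definition PA :: "('x \<Rightarrow> int) set \<Rightarrow> nat \<Rightarrow> nat" where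
  "PA A m = (if A = {} then 0 else Phi (int (ld A)) m)"

context
  fixes H :: "('x \<Rightarrow> int) set" and d :: nat
  assumes LH: "Ldim H = enat d"
begin

lemma ld_fin: "A \<subseteq> H \<Longrightarrow> Ldim A = enat (ld A)"
proof -
  assume "A \<subseteq> H"
  then have "Ldim A \<le> enat d" using Ldim_mono LH by metis
  then obtain n where "Ldim A = enat n" using enat_ile by blast
  then show ?thesis by (simp add: ld_def)
qed

lemma ld_mono: "A \<subseteq> B \<Longrightarrow> B \<subseteq> H \<Longrightarrow> ld A \<le> ld B"
  using ld_fin[of A] ld_fin[of B] Ldim_mono[of A B] by auto

lemma split_ld:
  assumes AH: "A \<subseteq> H" and n1: "{h\<in>A. h x = 1} \<noteq> {}" and n0: "{h\<in>A. h x = -1} \<noteq> {}"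
  shows "ld {h\<in>A. h x = 1} < ld A \<or> ld {h\<in>A. h x = -1} < ld A"
proof (rule ccontr)
  assume "\<not> ?thesis"
  then have g: "ld A \<le> ld {h\<in>A. h x = 1}" "ld A \<le> ld {h\<in>A. h x = -1}" by auto
  obtain t1 where t1: "lcomplete (ld {h\<in>A. h x = 1}) t1" "lshattered {h\<in>A. h x = 1} t1"
    using Ldim_attain[OF n1 ld_fin] AH by auto
  obtain t0 where t0: "lcomplete (ld {h\<in>A. h x = -1}) t0" "lshattered {h\<in>A. h x = -1} t0"
    using Ldim_attain[OF n0 ld_fin] AH by auto
  obtain t1' where t1': "lcomplete (ld A) t1'" "lshattered {h\<in>A. h x = 1} t1'"
    using trunc[OF t1 g(1)] by auto
  obtain t0' where t0': "lcomplete (ld A) t0'" "lshattered {h\<in>A. h x = -1} t0'"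
    using trunc[OF t0 g(2)] by auto
  have "lcomplete (Suc (ld A)) (LNode x t0' t1')" "lshattered A (LNode x t0' t1')"
    using t1' t0' by (auto simp: lcomplete_node lshattered_node)
  then have "enat (Suc (ld A)) \<le> Ldim A" by (rule Ldim_ge)
  then show False using ld_fin[OF AH] by simp
qed

lemma PA_split:
  assumes AH: "A \<subseteq> H"
  shows "PA {h\<in>A. h x = 1} m + PA {h\<in>A. h x = -1} m \<le> PA A (Suc m)"
proof -
  let ?A1 = "{h\<in>A. h x = 1}" and ?A0 = "{h\<in>A. h x = -1}"
  have s1: "?A1 \<subseteq> H" "?A0 \<subseteq> H" using AH by auto
  have m1: "ld ?A1 \<le> ld A" "ld ?A0 \<le> ld A" using ld_mono AH by auto
  show ?thesis
  proof (cases "A = {}")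
    case True then show ?thesis by (simp add: PA_def)
  next
    case Ane: False
    have PA_le: "PA B m \<le> Phi (int (ld A)) m" if "B \<subseteq> A" for B
      using Phi_mono_r[of "int (ld B)" "int (ld A)" m] ld_mono[OF that AH] by (auto simp: PA_def)
    have PAA: "PA A (Suc m) = Phi (int (ld A)) m + Phi (int (ld A) - 1) m" using Ane by (simp add: PA_def)
    show ?thesis
    proof (cases "?A1 = {} \<or> ?A0 = {}")
      case True
      have e0: "PA {} m = 0" by (simp add: PA_def)
      note T = True
      have "PA ?A1 m + PA ?A0 m \<le> Phi (int (ld A)) m"
      proof (cases "?A1 = {}")
        case True then have "PA ?A1 m = 0" by (simp only: e0)
        then show ?thesis using PA_le[of ?A0] by simp
      next
        case False then have "?A0 = {}" using T by blast
        then have "PA ?A0 m = 0" by (simp only: e0)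
        then show ?thesis using PA_le[of ?A1] by simp
      qed
      then show ?thesis using PAA by linarith
    next
      case False
      then have ne: "?A1 \<noteq> {}" "?A0 \<noteq> {}" by auto
      have lowle: "PA B m \<le> Phi (int (ld A) - 1) m" if "B \<subseteq> A" "ld B < ld A" for B
        using Phi_mono_r[of "int (ld B)" "int (ld A) - 1" m] that by (auto simp: PA_def)
      from split_ld[OF AH ne] show ?thesis
        using lowle[of ?A1] lowle[of ?A0] PA_le[of ?A1] PA_le[of ?A0] PAA by auto
    qed
  qed
qed

end



fun Q :: "('x \<Rightarrow> int) set \<Rightarrow> int \<Rightarrow> ('x \<times> int) list \<Rightarrow> nat \<Rightarrow> nat" where
  "Q A r [] m = Phi r m * PA A m"
| "Q A r ((x,y)#cs) m = Q {h\<in>A. h x = y} r cs m + Q {h\<in>A. h x \<noteq> y} (r - 1) cs m"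

fun fr :: "'x etree \<Rightarrow> nat \<Rightarrow> nat" where
  "fr (ELeaf h) m = 1"
| "fr (ENode x b l r) 0 = 1"
| "fr (ENode x b l r) (Suc m) = fr l m + fr r m"

lemma fr_pos: "1 \<le> fr t m"
proof (induction t arbitrary: m)
  case (ENode x b l r)
  show ?case
  proof (cases m)
    case (Suc m')
    have "1 \<le> fr l m'" by (rule ENode.IH(1))
    then show ?thesis using Suc by simp
  qed simp
qed simp

lemma Q_pos: "h \<in> A \<Longrightarrow> int (length (filter (\<lambda>(x,y). h x \<noteq> y) cs)) \<le> r \<Longrightarrow> 1 \<le> Q A r cs m"
proof (induction cs arbitrary: A r)
  case Nil
  then have "1 \<le> Phi r m" using Phi_pos[of r m] by simp
  moreover have "1 \<le> PA A m" using Nil Phi_pos[of "int (ld A)" m] by (auto simp: PA_def)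
  ultimately show ?case by (simp add: one_le_mult_iff)
next
  case (Cons p cs)
  obtain x y where p: "p = (x,y)" by (cases p)
  show ?case
  proof (cases "h x = y")
    case True
    then have "1 \<le> Q {h\<in>A. h x = y} r cs m" using Cons by (intro Cons.IH) (auto simp: p)
    then show ?thesis by (simp add: p)
  next
    case False
    then have "1 \<le> Q {h\<in>A. h x \<noteq> y} (r - 1) cs m" using Cons by (intro Cons.IH) (auto simp: p)
    then show ?thesis by (simp add: p)
  qed
qed

lemma evalid_ex: "evalid F cs t \<Longrightarrow> \<exists>g\<in>F. \<forall>(x,y)\<in>set cs. g x = y"
proof (induction t arbitrary: cs)
  case (ELeaf h) then show ?case by auto
next
  case (ENode x b l r)
  then obtain g where "g \<in> F" "\<forall>(a,c)\<in>set ((x,-1)#cs). g a = c" by fastforce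
  then show ?case by auto
qed

lemma difficult_leaf: "difficult k M (ELeaf h) \<Longrightarrow> M = 0"
  unfolding difficult_def by (simp add: num_solid_def)

lemma fr_lower: "difficult j M t \<Longrightarrow> m \<le> M \<Longrightarrow> Phi (int j + 1) m \<le> fr t m"
proof (induction t arbitrary: j m M)
  case (ELeaf h)
  then show ?case using difficult_leaf by fastforce
next
  case (ENode x b lt rt)
  show ?case
  proof (cases m)
    case 0 then show ?thesis by simp
  next
    case (Suc m')
    let ?cd = "if b then rt else lt" and ?co = "if b then lt else rt"
    have D1: "difficult j (M - 1) ?cd" unfolding difficult_def
    proof (intro ballI impI)
      fix p assume p: "p \<in> epaths ?cd" "num_solid p \<le> j"
      then have "Dashed # p \<in> epaths (ENode x b lt rt)" by auto
      moreover have "num_solid (Dashed # p) \<le> j" using p by (simp add: num_solid_def)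
      ultimately have "M \<le> length (Dashed # p)" using ENode.prems(1) unfolding difficult_def by blast
      then show "M - 1 \<le> length p" by simp
    qed
    have D2: "difficult (j - 1) (M - 1) ?co" if j1: "j \<ge> 1" unfolding difficult_def
    proof (intro ballI impI)
      fix p assume p: "p \<in> epaths ?co" "num_solid p \<le> j - 1"
      have "(if b then SolidL else SolidR) # p \<in> epaths (ENode x b lt rt)" using p by auto
      moreover have "num_solid ((if b then SolidL else SolidR) # p) \<le> j" using p j1 by (simp add: num_solid_def)
      ultimately have "M \<le> length ((if b then SolidL else SolidR) # p)"
        using ENode.prems(1) unfolding difficult_def by blast
      then show "M - 1 \<le> length p" by simp
    qed
    have mM: "m' \<le> M - 1" using Suc ENode.prems(2) by simp
    have c1: "Phi (int j + 1) m' \<le> fr ?cd m'"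
      using D1 mM ENode.IH by (cases b) auto
    have c2: "Phi (int j) m' \<le> fr ?co m'"
    proof (cases "j = 0")
      case True then show ?thesis using fr_pos[of ?co m'] Phi_sum[of 0 m'] by simp
    next
      case False
      have d2: "difficult (j-1) (M-1) ?co" using D2 False by simp
      have "Phi (int (j - 1) + 1) m' \<le> fr ?co m'"
      proof (cases b)
        case True then show ?thesis using ENode.IH(1)[of "j-1" "M-1" m'] d2 mM by simp
      next
        case False then show ?thesis using ENode.IH(2)[of "j-1" "M-1" m'] d2 mM by simp
      qed
      then show ?thesis using False by (simp add: of_nat_diff)
    qed
    have "fr (ENode x b lt rt) m = fr ?cd m' + fr ?co m'" using Suc by (cases b) auto
    moreover have "Phi (int j + 1) m = Phi (int j + 1) m' + Phi (int j) m'" using Suc by simp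
    ultimately show ?thesis using c1 c2 by linarith
  qed
qed

context
  fixes H :: "('x \<Rightarrow> int) set" and d :: nat
  assumes H01: "\<forall>h\<in>H. \<forall>x. h x \<in> {-1, 1}" and LH: "Ldim H = enat d"
begin

lemma Q_split: "A \<subseteq> H \<Longrightarrow> Q A r ((x,1)#cs) m + Q A r ((x,-1)#cs) m \<le> Q A r cs (Suc m)"
proof (induction cs arbitrary: A r)
  case Nil
  have e1: "{h\<in>A. h x \<noteq> 1} = {h\<in>A. h x = -1}" "{h\<in>A. h x \<noteq> -1} = {h\<in>A. h x = 1}"
    using Nil H01 by auto
  have S: "PA {h\<in>A. h x = 1} m + PA {h\<in>A. h x = -1} m \<le> PA A (Suc m)"
    by (rule PA_split[OF LH Nil])
  have "Q A r [(x,1)] m + Q A r [(x,-1)] m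
      = (Phi r m + Phi (r - 1) m) * (PA {h\<in>A. h x = 1} m + PA {h\<in>A. h x = -1} m)"
    by (simp add: e1 algebra_simps)
  also have "\<dots> \<le> (Phi r m + Phi (r - 1) m) * PA A (Suc m)"
    by (rule mult_left_mono[OF S]) simp
  also have "\<dots> = Q A r [] (Suc m)" by simp
  finally show ?case .
next
  case (Cons p cs)
  obtain z w where p: "p = (z,w)" by (cases p)
  have s1: "{h\<in>A. h z = w} \<subseteq> H" "{h\<in>A. h z \<noteq> w} \<subseteq> H" using Cons.prems by auto
  from Cons.IH[OF s1(1), of r] Cons.IH[OF s1(2), of "r - 1"]
  show ?case by (simp add: p conj_ac)
qed

lemma Q_ge1:
  assumes g: "g \<in> Hl H l" and c: "\<forall>(x,y)\<in>set cs. g x = y" and dist: "distinct (map fst cs)"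
  shows "1 \<le> Q H (int l) cs m"
proof -
  obtain h c where hc: "g = (\<lambda>x. h x * c x)" "h \<in> H" and cc: "c \<in> Cl l"
    using g unfolding Hl_def by blast
  obtain D where cD: "c = (\<lambda>x. 1 - 2 * (if x \<in> D then 1 else 0))" "finite D" "card D \<le> l"
    using cc unfolding Cl_def by blast
  define P where "P = (\<lambda>(x::'x, y::int). h x \<noteq> y)"
  have sub: "set (map fst (filter P cs)) \<subseteq> D"
  proof
    fix x assume "x \<in> set (map fst (filter P cs))"
    then obtain y where xy: "(x,y) \<in> set cs" "h x \<noteq> y" by (auto simp: P_def)
    then have "h x * c x = y" using c hc by auto
    then show "x \<in> D" using xy cD by (cases "x \<in> D") auto
  qed
  have "length (filter P cs) = length (map fst (filter P cs))" by simp
  also have "\<dots> = card (set (map fst (filter P cs)))"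
    by (metis distinct_card distinct_map_filter dist)
  also have "\<dots> \<le> card D" by (rule card_mono[OF cD(2) sub])
  finally have "length (filter P cs) \<le> l" using cD by simp
  then show ?thesis using Q_pos[OF hc(2), of cs "int l" m] by (simp add: P_def)
qed

lemma fr_upper: "evalid (Hl H l) cs t \<Longrightarrow> distinct (map fst cs) \<Longrightarrow> fr t m \<le> Q H (int l) cs m"
proof (induction t arbitrary: cs m)
  case (ELeaf g)
  then show ?case using Q_ge1[of g l cs m] by simp
next
  case (ENode x b lt rt)
  have vl: "evalid (Hl H l) ((x,-1)#cs) lt" and vr: "evalid (Hl H l) ((x,1)#cs) rt"
    using ENode.prems by auto
  obtain g1 where g1: "\<forall>(a,c)\<in>set ((x,-1)#cs). g1 a = c" using evalid_ex[OF vl] by blast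
  obtain g2 where g2: "\<forall>(a,c)\<in>set ((x,1)#cs). g2 a = c" using evalid_ex[OF vr] by blast
  have xn: "x \<notin> fst ` set cs"
  proof
    assume "x \<in> fst ` set cs"
    then obtain y where "(x,y) \<in> set cs" by auto
    then show False using g1 g2 by fastforce
  qed
  show ?case
  proof (cases m)
    case 0
    obtain g where "g \<in> Hl H l" "\<forall>(a,c)\<in>set cs. g a = c"
      using evalid_ex[OF ENode.prems(1)] by blast
    then show ?thesis using Q_ge1[of g l cs m] ENode.prems(2) 0 by simp
  next
    case (Suc m')
    have "fr lt m' \<le> Q H (int l) ((x,-1)#cs) m'" using ENode.IH(1)[OF vl] xn ENode.prems(2) by simp
    moreover have "fr rt m' \<le> Q H (int l) ((x,1)#cs) m'" using ENode.IH(2)[OF vr] xn ENode.prems(2) by simp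
    moreover have "Q H (int l) ((x,1)#cs) m' + Q H (int l) ((x,-1)#cs) m' \<le> Q H (int l) cs (Suc m')"
      by (rule Q_split) simp
    ultimately show ?thesis using Suc by simp
  qed
qed

lemma main_count:
  assumes "ext_mistake_tree (Hl H l) t" "difficult k M t"
  shows "Phi (int k + 1) M \<le> Phi (int l) M * Phi (int d) M"
proof -
  have "Phi (int k + 1) M \<le> fr t M" by (rule fr_lower[OF assms(2)]) simp
  also have "\<dots> \<le> Q H (int l) [] M"
    by (rule fr_upper) (use assms(1) in \<open>auto simp: ext_mistake_tree_def\<close>)
  also have "\<dots> \<le> Phi (int l) M * Phi (int d) M"
    using ld_fin[OF LH, of H] LH by (auto simp: PA_def)
  finally show ?thesis .
qed

end


theorem mainTheorem6:
  fixes H :: "('x \<Rightarrow> int) set" and d k l :: nat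
  assumes "\<forall>h\<in>H. \<forall>x. h x \<in> {-1, 1}"
    and "Ldim H = enat d"
    and "k \<ge> l + d"
  shows "ereal_of_enat (ELdim (Hl H l) k)
           \<le> ereal ((real k + 1) * exp ((2 * real k + 2) / (real k + 1 - real l - real d)))"
proof -
  define B where "B = (real k + 1) * exp ((2 * real k + 2) / (real k + 1 - real l - real d))"
  have B0: "0 \<le> B" unfolding B_def by simp
  define N where "N = nat \<lfloor>B\<rfloor>"
  have "ELdim (Hl H l) k \<le> enat N" unfolding ELdim_def
  proof (rule Sup_least)
    fix y assume "y \<in> {enat m |m. \<exists>t. ext_mistake_tree (Hl H l) t \<and> difficult k m t}"
    then obtain m t where y: "y = enat m" "ext_mistake_tree (Hl H l) t" "difficult k m t" by blast
    have "Phi (int k + 1) m \<le> Phi (int l) m * Phi (int d) m"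
      by (rule main_count[OF assms(1) assms(2) y(2) y(3)])
    then have "real m \<le> B" unfolding B_def by (rule real_final[OF assms(3)])
    then have "m \<le> N" unfolding N_def by (simp add: le_nat_floor)
    then show "y \<le> enat N" using y by simp
  qed
  then have "ereal_of_enat (ELdim (Hl H l) k) \<le> ereal_of_enat (enat N)"
    by (subst ereal_of_enat_le_iff)
  also have "\<dots> = ereal (real N)" by simp
  also have "real N \<le> B" unfolding N_def using B0 by simp
  finally show ?thesis unfolding B_def by simp
qed

end
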